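(* As $n\to\infty$, $$E\Bigl[\Bigl(\frac{\widehat H_n}{h_n}-1\Bigr)^2\Bigr]\to 0,$$ i.e. $\widehat H_n/h_n\to1$ in quadratic mean. In particular $E[\widehat H_n]/h_n\to 1$.
   Context: $X$ is a positive random variable with survival function $S(x)=P(X>x)$ satisfying $S(x)>0$ for all $x\ge0$. Write $S_-(x)=P(X\ge x)$. For each integer $n\ge1$, the theoretical $h$-index is $$h_n=\sup\{x\ge 0:\ nS_-(x)\ge x\}.$$ Let $X_1,\dots,X_n$ be independent copies of $X$, and write $\widehat S_{n-}(x)=\frac1n\sum_{i=1}^n\mathbf 1\{X_i\ge x\}$. The empirical $h$-index is $$\widehat H_n=\sup\{x\ge0:\ n\widehat S_{n-}(x)\ge x\}.$$ *)

theory Defs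
  imports "HOL-Probability.Probability"
begin

definition hidx :: "(real \<Rightarrow> real) \<Rightarrow> real" where
  "hidx G = Sup {x. 0 \<le> x \<and> x \<le> G x}"

definition theo_h :: "'a measure \<Rightarrow> ('a \<Rightarrow> real) \<Rightarrow> nat \<Rightarrow> real" where
  "theo_h M X n = hidx (\<lambda>x. real n * measure M {\<omega> \<in> space M. X \<omega> \<ge> x})"

text \<open>Empirical h-index from the sample X 0, ..., X (n-1):
  n * empirical S_-(x) is the number of i < n with X i \<ge> x.\<close>
definition emp_h :: "(nat \<Rightarrow> 'a \<Rightarrow> real) \<Rightarrow> nat \<Rightarrow> 'a \<Rightarrow> real" where
  "emp_h X n \<omega> = hidx (\<lambda>x. real (card {i. i < n \<and> X i \<omega> \<ge> x}))"

end

theory Submission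
  imports Defs "HOL-Real_Asymp.Real_Asymp"
begin


locale hidx_loc =
  fixes G :: "real \<Rightarrow> real" and B :: real
  assumes anti: "\<And>x y. x \<le> y \<Longrightarrow> G y \<le> G x"
    and nn: "\<And>x. 0 \<le> G x" and bd: "\<And>x. G x \<le> B"
begin

lemma S0: "0 \<in> {x. 0 \<le> x \<and> x \<le> G x}" using nn by auto

lemma Sbdd: "bdd_above {x. 0 \<le> x \<and> x \<le> G x}"
proof (rule bdd_aboveI[where M=B])
  fix x assume "x \<in> {x. 0 \<le> x \<and> x \<le> G x}"
  thus "x \<le> B" using bd[of x] by simp
qed

lemma hidx_ge: "0 \<le> y \<Longrightarrow> y \<le> G y \<Longrightarrow> y \<le> hidx G"
  unfolding hidx_def by (rule cSup_upper) (use Sbdd in auto)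

lemma hidx_nonneg: "0 \<le> hidx G" using hidx_ge[of 0] nn by auto

lemma hidx_le_B: "hidx G \<le> B"
  unfolding hidx_def
proof (rule cSup_least)
  show "{x. 0 \<le> x \<and> x \<le> G x} \<noteq> {}" using S0 by blast
  fix x assume "x \<in> {x. 0 \<le> x \<and> x \<le> G x}"
  thus "x \<le> B" using bd[of x] by simp
qed

lemma hidx_exists: assumes "a < hidx G" shows "\<exists>y. a < y \<and> 0 \<le> y \<and> y \<le> G y"
proof -
  from less_cSupD[OF _ assms[unfolded hidx_def]] S0 obtain y where "y \<in> {x. 0 \<le> x \<and> x \<le> G x}" "a < y"
    by blast
  thus ?thesis by auto
qed

lemma hidx_above: assumes "hidx G < y" shows "G y < y"
proof (rule ccontr)
  assume "\<not> G y < y"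
  hence "y \<le> G y" by simp
  moreover have "0 \<le> y" using hidx_nonneg assms by simp
  ultimately have "y \<le> hidx G" by (rule_tac hidx_ge) auto
  thus False using assms by simp
qed

lemma hidx_below: assumes "a < hidx G" shows "a < G a"
proof -
  obtain y where y: "a < y" "0 \<le> y" "y \<le> G y" using hidx_exists[OF assms] by blast
  have "G y \<le> G a" using anti y(1) by simp
  thus ?thesis using y by simp
qed

lemma hidx_upper: "hidx G \<le> max b (G b)"
  unfolding hidx_def
proof (rule cSup_least)
  show "{x. 0 \<le> x \<and> x \<le> G x} \<noteq> {}" using S0 by blast
  fix x assume "x \<in> {x. 0 \<le> x \<and> x \<le> G x}"
  hence x: "0 \<le> x" "x \<le> G x" by auto
  show "x \<le> max b (G b)"
  proof (cases "x \<le> b")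
    case False
    hence "G x \<le> G b" using anti by simp
    thus ?thesis using x by simp
  qed simp
qed

lemma hidx_lower: assumes "0 \<le> a" shows "min a (G a) \<le> hidx G"
proof (rule hidx_ge)
  show "0 \<le> min a (G a)" using assms nn by simp
  have "G a \<le> G (min a (G a))" using anti by simp
  thus "min a (G a) \<le> G (min a (G a))" by simp
qed

end


locale hsetup = prob_space M for M :: "'a measure" +
  fixes X :: "nat \<Rightarrow> 'a \<Rightarrow> real"
  assumes rv[measurable]: "\<And>i. X i \<in> borel_measurable M"
    and indep: "indep_vars (\<lambda>_. borel) X UNIV"
    and ident: "\<And>i. distr M borel (X i) = distr M borel (X 0)"
begin

definition Ind :: "nat \<Rightarrow> real \<Rightarrow> 'a \<Rightarrow> real" where
  "Ind i x \<omega> = (if x \<le> X i \<omega> then 1 else 0)"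

definition P :: "real \<Rightarrow> real" where
  "P x = measure M {\<omega> \<in> space M. x \<le> X 0 \<omega>}"

lemma Ind_meas[measurable]: "Ind i x \<in> borel_measurable M"
  unfolding Ind_def by measurable

lemma card_sum: fixes n :: nat shows "real (card {i. i < n \<and> Q i}) = (\<Sum>i<n. if Q i then 1 else 0)"
proof (induct n)
  case (Suc n)
  have "{i. i < Suc n \<and> Q i} = {i. i < n \<and> Q i} \<union> (if Q n then {n} else {})"
    by (auto simp: less_Suc_eq)
  thus ?case using Suc by (auto simp: card_insert_if)
qed simp

lemma emp_eq: "emp_h X n \<omega> = hidx (\<lambda>x. \<Sum>i<n. Ind i x \<omega>)"
  unfolding emp_h_def Ind_def using card_sum[of n "\<lambda>i. _ \<le> X i \<omega>"] by simp

lemma prob_i: "measure M {\<omega> \<in> space M. x \<le> X i \<omega>} = P x"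
proof -
  have "measure M {\<omega> \<in> space M. x \<le> X i \<omega>} = measure (distr M borel (X i)) {x..}"
    by (subst measure_distr) (auto intro!: arg_cong[where f="measure M"])
  also have "\<dots> = measure (distr M borel (X 0)) {x..}" by (subst ident[of i]) (rule refl)
  also have "\<dots> = P x" unfolding P_def
    by (subst measure_distr) (auto intro!: arg_cong[where f="measure M"])
  finally show ?thesis .
qed

lemma E_Ind: "expectation (Ind i x) = P x"
proof -
  have "expectation (Ind i x) = expectation (indicator {\<omega> \<in> space M. x \<le> X i \<omega>})"
    by (rule Bochner_Integration.integral_cong) (auto simp: Ind_def)
  also have "\<dots> = P x" using prob_i by (simp add: Int_absorb2 subset_iff)
  finally show ?thesis .
qed

lemma Ind_int: "integrable M (\<lambda>\<omega>. Ind i x \<omega> - c)"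
  by (rule integrable_const_bound[where B="1 + \<bar>c\<bar>"]) (auto simp: Ind_def)

lemma Ind_int0: "integrable M (Ind i x)"
  using Ind_int[of i x 0] by simp

lemma P_bounds: "0 \<le> P x" "P x \<le> 1"
  unfolding P_def by auto

lemma absY: "\<bar>Ind i x \<omega> - P x\<bar> \<le> 1"
  using P_bounds[of x] by (auto simp: Ind_def)

lemma cross: assumes "i \<noteq> j"
  shows "expectation (\<lambda>\<omega>. (Ind i x \<omega> - P x) * (Ind j x \<omega> - P x)) = 0"
proof -
  define Y where "Y = (\<lambda>(k::nat) (y::real). (if x \<le> y then 1 else 0) - P x)"
  have ind2: "indep_vars (\<lambda>_. borel) (\<lambda>k \<omega>. Y k (X k \<omega>)) {i, j}"
    by (rule indep_vars_compose2[OF indep_vars_subset[OF indep]]) (auto simp: Y_def)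
  have eq: "(\<lambda>\<omega>. (Ind i x \<omega> - P x) * (Ind j x \<omega> - P x)) = (\<lambda>\<omega>. \<Prod>k\<in>{i,j}. Y k (X k \<omega>))"
    using assms by (auto simp: Y_def Ind_def)
  have "expectation (\<lambda>\<omega>. \<Prod>k\<in>{i,j}. Y k (X k \<omega>)) = (\<Prod>k\<in>{i,j}. expectation (\<lambda>\<omega>. Y k (X k \<omega>)))"
    by (rule indep_vars_lebesgue_integral[OF _ ind2])
      (auto simp: Y_def intro!: integrable_const_bound[where B="1 + \<bar>P x\<bar>"])
  also have "\<dots> = expectation (\<lambda>\<omega>. Y i (X i \<omega>)) * expectation (\<lambda>\<omega>. Y j (X j \<omega>))"
    using assms by simp
  also have "expectation (\<lambda>\<omega>. Y i (X i \<omega>)) = 0"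
  proof -
    have "expectation (\<lambda>\<omega>. Y i (X i \<omega>)) = expectation (\<lambda>\<omega>. Ind i x \<omega> - P x)"
      by (simp add: Y_def Ind_def)
    also have "\<dots> = 0" using E_Ind[of i x] Ind_int0[of i x]
      by (subst Bochner_Integration.integral_diff) (auto simp: prob_space)
    finally show ?thesis .
  qed
  finally show ?thesis using eq assms by simp
qed

lemma diag: "expectation (\<lambda>\<omega>. (Ind i x \<omega> - P x) * (Ind i x \<omega> - P x)) = P x - (P x)\<^sup>2"
proof -
  have "(\<lambda>\<omega>. (Ind i x \<omega> - P x) * (Ind i x \<omega> - P x)) = (\<lambda>\<omega>. (1 - 2 * P x) * Ind i x \<omega> + (P x)\<^sup>2)"
    by (auto simp: Ind_def power2_eq_square algebra_simps)
  moreover have "expectation (\<lambda>\<omega>. (1 - 2 * P x) * Ind i x \<omega> + (P x)\<^sup>2) =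
      (1 - 2 * P x) * expectation (Ind i x) + (P x)\<^sup>2"
    using Ind_int0[of i x] by (subst Bochner_Integration.integral_add) (auto simp: prob_space)
  ultimately show ?thesis using E_Ind[of i x]
    by (simp add: power2_eq_square algebra_simps)
qed

lemma var_bound: "expectation (\<lambda>\<omega>. (\<Sum>i<n. Ind i x \<omega> - P x)\<^sup>2) \<le> real n * P x"
proof -
  have sq: "(\<lambda>\<omega>. (\<Sum>i<n. Ind i x \<omega> - P x)\<^sup>2) =
      (\<lambda>\<omega>. \<Sum>i<n. \<Sum>j<n. (Ind i x \<omega> - P x) * (Ind j x \<omega> - P x))"
    by (auto simp: power2_eq_square sum_product)
  have int: "integrable M (\<lambda>\<omega>. (Ind i x \<omega> - P x) * (Ind j x \<omega> - P x))" for i j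
    by (rule integrable_const_bound[where B=1])
      (auto simp: abs_mult intro!: mult_le_one absY)
  have "expectation (\<lambda>\<omega>. (\<Sum>i<n. Ind i x \<omega> - P x)\<^sup>2) =
      (\<Sum>i<n. \<Sum>j<n. expectation (\<lambda>\<omega>. (Ind i x \<omega> - P x) * (Ind j x \<omega> - P x)))"
    unfolding sq using int by (simp add: integral_sum integrable_sum)
  also have "\<dots> = (\<Sum>i<n. P x - (P x)\<^sup>2)"
  proof (rule sum.cong[OF refl])
    fix i assume i: "i \<in> {..<n}"
    have "(\<Sum>j<n. expectation (\<lambda>\<omega>. (Ind i x \<omega> - P x) * (Ind j x \<omega> - P x))) =
        (\<Sum>j\<in>{i}. expectation (\<lambda>\<omega>. (Ind i x \<omega> - P x) * (Ind j x \<omega> - P x)))"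
      by (rule sum.mono_neutral_right) (use i cross in auto)
    thus "(\<Sum>j<n. expectation (\<lambda>\<omega>. (Ind i x \<omega> - P x) * (Ind j x \<omega> - P x))) = P x - (P x)\<^sup>2"
      using diag by simp
  qed
  also have "\<dots> \<le> real n * P x" by (simp, intro mult_left_mono) auto
  finally show ?thesis .
qed

end


lemma ptwise:
  fixes H h u v a b ma mb :: real
  assumes H1: "H \<le> max b u" and H2: "min a v \<le> H" and v: "0 \<le> v"
    and b: "b = h + 1" and a: "a = h - 1" and mb: "mb < b" and ma: "a < ma" and a1: "1 \<le> a"
  shows "(H / h - 1)\<^sup>2 \<le> 3 * (1 + (u - mb)\<^sup>2 + (a / ma)\<^sup>2 * (v - ma)\<^sup>2) / h\<^sup>2"
proof -
  have hpos: "h > 0" using a a1 by simp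
  have mapos: "ma > 0" using ma a1 by simp
  have c1: "a / ma \<le> 1" "0 \<le> a / ma" using ma mapos a1 by auto
  have up: "H - h \<le> 1 + \<bar>u - mb\<bar>" using H1 b mb by (auto simp: max_def split: if_splits)
  have cv: "a / ma * v \<le> v" by (rule mult_left_le_one_le[OF v c1(2) c1(1)])
  have cma: "a / ma * ma = a" using mapos by simp
  have lo: "h - H \<le> 1 + a / ma * \<bar>v - ma\<bar>"
  proof (cases "a \<le> v")
    case True
    hence "h - H \<le> 1" using H2 a by (simp add: min_def)
    moreover have "0 \<le> a / ma * \<bar>v - ma\<bar>" using c1(2) by (rule mult_nonneg_nonneg) simp
    ultimately show ?thesis by linarith
  next
    case False
    hence "h - H \<le> h - v" using H2 by (simp add: min_def)
    also have "\<dots> = 1 + (a - v)" using a by simp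
    also have "\<dots> \<le> 1 + a / ma * (ma - v)" using cv cma by (simp add: right_diff_distrib)
    also have "\<dots> \<le> 1 + a / ma * \<bar>v - ma\<bar>" using c1 by (intro add_left_mono mult_left_mono) auto
    finally show ?thesis .
  qed
  have "\<bar>H - h\<bar> \<le> 1 + \<bar>u - mb\<bar> + a / ma * \<bar>v - ma\<bar>"
  proof -
    have nn1: "0 \<le> a / ma * \<bar>v - ma\<bar>" by (rule mult_nonneg_nonneg) (use c1 in auto)
    show ?thesis unfolding abs_le_iff using up lo nn1 abs_ge_zero[of "u - mb"] by linarith
  qed
  hence "(H - h)\<^sup>2 \<le> (1 + \<bar>u - mb\<bar> + a / ma * \<bar>v - ma\<bar>)\<^sup>2"
    using power_mono[OF _ abs_ge_zero, of "H - h" _ 2] by simp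
  also have "\<dots> \<le> 3 * (1 + (u - mb)\<^sup>2 + (a / ma)\<^sup>2 * (v - ma)\<^sup>2)"
  proof -
    have sq3: "\<And>x y z :: real. (x + y + z)\<^sup>2 \<le> 3 * (x\<^sup>2 + y\<^sup>2 + z\<^sup>2)"
    proof -
      fix x y z :: real
      have "3 * (x\<^sup>2 + y\<^sup>2 + z\<^sup>2) - (x + y + z)\<^sup>2 = (x - y)\<^sup>2 + (y - z)\<^sup>2 + (x - z)\<^sup>2"
        by (simp add: power2_eq_square algebra_simps)
      moreover have "0 \<le> (x - y)\<^sup>2 + (y - z)\<^sup>2 + (x - z)\<^sup>2" by simp
      ultimately show "(x + y + z)\<^sup>2 \<le> 3 * (x\<^sup>2 + y\<^sup>2 + z\<^sup>2)" by linarith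
    qed
    have eq: "(a / ma * \<bar>v - ma\<bar>)\<^sup>2 = (a / ma)\<^sup>2 * (v - ma)\<^sup>2"
      by (simp add: power_mult_distrib power_divide)
    show ?thesis using sq3[of 1 "\<bar>u - mb\<bar>" "a / ma * \<bar>v - ma\<bar>"] unfolding eq power2_abs by simp
  qed
  finally have "(H - h)\<^sup>2 \<le> 3 * (1 + (u - mb)\<^sup>2 + (a / ma)\<^sup>2 * (v - ma)\<^sup>2)" .
  moreover have "(H / h - 1)\<^sup>2 = (H - h)\<^sup>2 / h\<^sup>2" using hpos by (simp add: field_simps)
  ultimately show ?thesis using hpos by (simp add: divide_right_mono)
qed

context hsetup begin

lemma P_anti: "x \<le> y \<Longrightarrow> P y \<le> P x"
  unfolding P_def by (rule finite_measure_mono) auto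

lemma theo_eq: "theo_h M (X 0) n = hidx (\<lambda>y. real n * P y)"
  unfolding theo_h_def P_def by simp

lemma theo_loc: "hidx_loc (\<lambda>y. real n * P y) (real n)"
proof
  show "real n * P y \<le> real n * P x" if "x \<le> y" for x y
    using P_anti[OF that] by (rule mult_left_mono) simp
  show "0 \<le> real n * P x" for x using P_bounds[of x] by simp
  show "real n * P x \<le> real n" for x using P_bounds[of x] mult_left_le[of "P x" "real n"] by simp
qed

lemma emp_loc: "hidx_loc (\<lambda>x. \<Sum>i<n. Ind i x \<omega>) (real n)"
proof
  show "(\<Sum>i<n. Ind i y \<omega>) \<le> (\<Sum>i<n. Ind i x \<omega>)" if "x \<le> y" for x y
    using that by (intro sum_mono) (auto simp: Ind_def)
  show "0 \<le> (\<Sum>i<n. Ind i x \<omega>)" for x by (intro sum_nonneg) (auto simp: Ind_def)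
  show "(\<Sum>i<n. Ind i x \<omega>) \<le> real n" for x
    using sum_bounded_above[of "{..<n}" "\<lambda>i. Ind i x \<omega>" 1] by (auto simp: Ind_def)
qed

lemma emp_meas[measurable]: "emp_h X n \<in> borel_measurable M"
proof (unfold borel_measurable_iff_greater, intro allI)
  fix a :: real
  let ?G = "\<lambda>\<omega> x. \<Sum>i<n. Ind i x \<omega>"
  let ?Q = "{q::real. q \<in> \<rat> \<and> a < q \<and> 0 \<le> q}"
  have eq: "{w \<in> space M. a < emp_h X n w} = (\<Union>q\<in>?Q. {w \<in> space M. q \<le> ?G w q})"
  proof (intro equalityI subsetI)
    fix w assume "w \<in> {w \<in> space M. a < emp_h X n w}"
    hence w: "w \<in> space M" "a < hidx (?G w)" by (simp_all add: emp_eq)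
    interpret L: hidx_loc "?G w" "real n" by (rule emp_loc)
    obtain y where y: "a < y" "0 \<le> y" "y \<le> ?G w y" using L.hidx_exists[OF w(2)] by blast
    show "w \<in> (\<Union>q\<in>?Q. {w \<in> space M. q \<le> ?G w q})"
    proof (cases "a < 0")
      case True
      show ?thesis
      proof (rule UN_I[of 0])
        show "(0::real) \<in> ?Q" using True by simp
        show "w \<in> {w \<in> space M. 0 \<le> ?G w 0}" using w(1) L.nn[of 0] by simp
      qed
    next
      case False
      obtain q where q: "q \<in> \<rat>" "a < q" "q < y" using Rats_dense_in_real[OF y(1)] by blast
      have "?G w y \<le> ?G w q" using q(3) by (intro L.anti) simp
      hence qG: "q \<le> ?G w q" using y(3) q(3) by linarith
      show ?thesis
      proof (rule UN_I[of q])
        show "q \<in> ?Q" using q False by simp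
        show "w \<in> {w \<in> space M. q \<le> ?G w q}" using w(1) qG by simp
      qed
    qed
  next
    fix w assume "w \<in> (\<Union>q\<in>?Q. {w \<in> space M. q \<le> ?G w q})"
    then obtain q where q: "q \<in> ?Q" "w \<in> space M" "q \<le> ?G w q" by blast
    interpret L: hidx_loc "?G w" "real n" by (rule emp_loc)
    have "q \<le> hidx (?G w)" using q(1,3) by (intro L.hidx_ge) simp_all
    hence "a < emp_h X n w" using q(1) by (simp add: emp_eq)
    thus "w \<in> {w \<in> space M. a < emp_h X n w}" using q(2) by simp
  qed
  have "(\<Union>q\<in>?Q. {w \<in> space M. q \<le> ?G w q}) \<in> sets M"
  proof (rule sets.countable_UN'')
    show "countable ?Q" by (rule countable_subset[OF _ countable_rat]) blast
    fix q show "{w \<in> space M. q \<le> ?G w q} \<in> sets M" by measurable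
  qed
  thus "{w \<in> space M. a < emp_h X n w} \<in> sets M" using eq by simp
qed

lemma int_sq_bound:
  fixes f :: "'a \<Rightarrow> real"
  assumes [measurable]: "f \<in> borel_measurable M" and bd: "\<And>\<omega>. \<bar>f \<omega>\<bar> \<le> B"
  shows "integrable M (\<lambda>\<omega>. (f \<omega>)\<^sup>2)"
proof (rule integrable_const_bound[where B="B\<^sup>2"])
  have "(f \<omega>)\<^sup>2 \<le> B\<^sup>2" for \<omega>
    using power_mono[OF bd[of \<omega>] abs_ge_zero, of 2] by simp
  thus "AE \<omega> in M. norm ((f \<omega>)\<^sup>2) \<le> B\<^sup>2" by (intro AE_I2) simp
  show "(\<lambda>\<omega>. (f \<omega>)\<^sup>2) \<in> borel_measurable M" by measurable
qed

lemma S_meas[measurable]: "(\<lambda>\<omega>. \<Sum>i<n. Ind i x \<omega> - P x) \<in> borel_measurable M"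
  by (intro borel_measurable_sum) simp

lemma S_int: "integrable M (\<lambda>\<omega>. (\<Sum>i<n. Ind i x \<omega> - P x)\<^sup>2)"
proof (rule int_sq_bound[OF S_meas])
  fix \<omega>
  have "(\<Sum>i<n. \<bar>Ind i x \<omega> - P x\<bar>) \<le> real n"
    using sum_bounded_above[of "{..<n}" "\<lambda>i. \<bar>Ind i x \<omega> - P x\<bar>" 1] absY by simp
  thus "\<bar>\<Sum>i<n. Ind i x \<omega> - P x\<bar> \<le> real n" by (rule order.trans[OF sum_abs])
qed

lemma emp_bounds: "0 \<le> emp_h X n \<omega>" "emp_h X n \<omega> \<le> real n"
proof -
  interpret L: hidx_loc "\<lambda>x. \<Sum>i<n. Ind i x \<omega>" "real n" by (rule emp_loc)
  show "0 \<le> emp_h X n \<omega>" "emp_h X n \<omega> \<le> real n"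
    using L.hidx_nonneg L.hidx_le_B by (auto simp: emp_eq)
qed

lemma Z_bd: "\<bar>emp_h X n \<omega> / h - 1\<bar> \<le> real n / \<bar>h\<bar> + 1"
proof -
  have "\<bar>emp_h X n \<omega> / h\<bar> \<le> real n / \<bar>h\<bar>"
    using emp_bounds[of n \<omega>] by (simp add: abs_divide divide_right_mono)
  thus ?thesis by linarith
qed

lemma Z_int: "integrable M (\<lambda>\<omega>. (emp_h X n \<omega> / h - 1)\<^sup>2)"
  by (rule int_sq_bound[OF _ Z_bd]) measurable

lemma Z1_int: "integrable M (\<lambda>\<omega>. emp_h X n \<omega> / h - 1)"
proof (rule integrable_const_bound[where B="real n / \<bar>h\<bar> + 1"])
  show "AE \<omega> in M. norm (emp_h X n \<omega> / h - 1) \<le> real n / \<bar>h\<bar> + 1"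
    by (intro AE_I2) (simp add: Z_bd)
  show "(\<lambda>\<omega>. emp_h X n \<omega> / h - 1) \<in> borel_measurable M" by measurable
qed

lemma emp_int: "integrable M (emp_h X n)"
proof (rule integrable_const_bound[where B="real n"])
  show "AE \<omega> in M. norm (emp_h X n \<omega>) \<le> real n"
    by (intro AE_I2) (use emp_bounds in simp)
qed measurable

lemma S_eq: "(\<Sum>i<n. Ind i x \<omega> - P x) = (\<Sum>i<n. Ind i x \<omega>) - real n * P x"
  by (simp add: sum_subtractf)

lemma bound:
  assumes h2: "2 \<le> theo_h M (X 0) n"
  shows "expectation (\<lambda>\<omega>. (emp_h X n \<omega> / theo_h M (X 0) n - 1)\<^sup>2)
           \<le> 3 * (1 + 2 * theo_h M (X 0) n) / (theo_h M (X 0) n)\<^sup>2"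
proof -
  define h where "h = theo_h M (X 0) n"
  interpret T: hidx_loc "\<lambda>y. real n * P y" "real n" by (rule theo_loc)
  have hh: "h = hidx (\<lambda>y. real n * P y)" unfolding h_def by (rule theo_eq)
  define a where "a = h - 1"
  define b where "b = h + 1"
  define ma where "ma = real n * P a"
  define mb where "mb = real n * P b"
  define c where "c = a / ma"
  have h2': "2 \<le> h" using h2 h_def by simp
  have mb: "mb < b" unfolding mb_def b_def hh by (rule T.hidx_above) simp
  have ma: "a < ma" unfolding ma_def a_def hh by (rule T.hidx_below) simp
  have a1: "1 \<le> a" using h2' a_def by simp
  have mapos: "0 < ma" using ma a1 by simp
  define Sa where "Sa = (\<lambda>\<omega>. \<Sum>i<n. Ind i a \<omega> - P a)"
  define Sb where "Sb = (\<lambda>\<omega>. \<Sum>i<n. Ind i b \<omega> - P b)"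
  have pt: "(emp_h X n \<omega> / h - 1)\<^sup>2 \<le> 3 * (1 + (Sb \<omega>)\<^sup>2 + c\<^sup>2 * (Sa \<omega>)\<^sup>2) / h\<^sup>2" for \<omega>
  proof -
    interpret E: hidx_loc "\<lambda>x. \<Sum>i<n. Ind i x \<omega>" "real n" by (rule emp_loc)
    have "(emp_h X n \<omega> / h - 1)\<^sup>2 \<le> 3 * (1 + ((\<Sum>i<n. Ind i b \<omega>) - mb)\<^sup>2 + (a / ma)\<^sup>2 * ((\<Sum>i<n. Ind i a \<omega>) - ma)\<^sup>2) / h\<^sup>2"
    proof (rule ptwise)
      show "emp_h X n \<omega> \<le> max b (\<Sum>i<n. Ind i b \<omega>)" unfolding emp_eq by (rule E.hidx_upper)
      show "min a (\<Sum>i<n. Ind i a \<omega>) \<le> emp_h X n \<omega>" unfolding emp_eq using a1 by (intro E.hidx_lower) simp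
      show "0 \<le> (\<Sum>i<n. Ind i a \<omega>)" by (rule E.nn)
    qed (use b_def a_def mb ma a1 in auto)
    thus ?thesis unfolding Sa_def Sb_def S_eq c_def ma_def mb_def .
  qed
  have intA: "integrable M (\<lambda>\<omega>. (Sb \<omega>)\<^sup>2)" unfolding Sb_def by (rule S_int)
  have intB: "integrable M (\<lambda>\<omega>. c\<^sup>2 * (Sa \<omega>)\<^sup>2)" unfolding Sa_def using S_int by simp
  have "expectation (\<lambda>\<omega>. (emp_h X n \<omega> / h - 1)\<^sup>2) \<le>
      expectation (\<lambda>\<omega>. 3 * (1 + (Sb \<omega>)\<^sup>2 + c\<^sup>2 * (Sa \<omega>)\<^sup>2) / h\<^sup>2)"
  proof (rule integral_mono)
    show "integrable M (\<lambda>\<omega>. (emp_h X n \<omega> / h - 1)\<^sup>2)" by (rule Z_int)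
    show "integrable M (\<lambda>\<omega>. 3 * (1 + (Sb \<omega>)\<^sup>2 + c\<^sup>2 * (Sa \<omega>)\<^sup>2) / h\<^sup>2)"
      using intA intB by simp
    show "(emp_h X n \<omega> / h - 1)\<^sup>2 \<le> 3 * (1 + (Sb \<omega>)\<^sup>2 + c\<^sup>2 * (Sa \<omega>)\<^sup>2) / h\<^sup>2" for \<omega>
      by (rule pt)
  qed
  also have "expectation (\<lambda>\<omega>. 3 * (1 + (Sb \<omega>)\<^sup>2 + c\<^sup>2 * (Sa \<omega>)\<^sup>2) / h\<^sup>2) =
      3 * (1 + expectation (\<lambda>\<omega>. (Sb \<omega>)\<^sup>2) + c\<^sup>2 * expectation (\<lambda>\<omega>. (Sa \<omega>)\<^sup>2)) / h\<^sup>2"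
  proof -
    have "expectation (\<lambda>\<omega>. 1 + (Sb \<omega>)\<^sup>2 + c\<^sup>2 * (Sa \<omega>)\<^sup>2) =
        expectation (\<lambda>\<omega>. 1 + (Sb \<omega>)\<^sup>2) + expectation (\<lambda>\<omega>. c\<^sup>2 * (Sa \<omega>)\<^sup>2)"
      using intA intB by (intro Bochner_Integration.integral_add) auto
    also have "expectation (\<lambda>\<omega>. 1 + (Sb \<omega>)\<^sup>2) = 1 + expectation (\<lambda>\<omega>. (Sb \<omega>)\<^sup>2)"
      using intA by (subst Bochner_Integration.integral_add) (auto simp: prob_space)
    also have "expectation (\<lambda>\<omega>. c\<^sup>2 * (Sa \<omega>)\<^sup>2) = c\<^sup>2 * expectation (\<lambda>\<omega>. (Sa \<omega>)\<^sup>2)"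
      by (rule integral_mult_right_zero)
    finally have e2: "expectation (\<lambda>\<omega>. 1 + (Sb \<omega>)\<^sup>2 + c\<^sup>2 * (Sa \<omega>)\<^sup>2) =
        1 + expectation (\<lambda>\<omega>. (Sb \<omega>)\<^sup>2) + c\<^sup>2 * expectation (\<lambda>\<omega>. (Sa \<omega>)\<^sup>2)" .
    have e1: "expectation (\<lambda>\<omega>. 3 * (1 + (Sb \<omega>)\<^sup>2 + c\<^sup>2 * (Sa \<omega>)\<^sup>2) / h\<^sup>2) =
        3 * expectation (\<lambda>\<omega>. 1 + (Sb \<omega>)\<^sup>2 + c\<^sup>2 * (Sa \<omega>)\<^sup>2) / h\<^sup>2"
      by (simp only: integral_divide_zero integral_mult_right_zero)
    show ?thesis unfolding e1 e2 ..
  qed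
  also have "\<dots> \<le> 3 * (1 + mb + c\<^sup>2 * ma) / h\<^sup>2"
  proof -
    have "expectation (\<lambda>\<omega>. (Sb \<omega>)\<^sup>2) \<le> mb" unfolding Sb_def mb_def by (rule var_bound)
    moreover have "expectation (\<lambda>\<omega>. (Sa \<omega>)\<^sup>2) \<le> ma" unfolding Sa_def ma_def by (rule var_bound)
    hence "c\<^sup>2 * expectation (\<lambda>\<omega>. (Sa \<omega>)\<^sup>2) \<le> c\<^sup>2 * ma" by (rule mult_left_mono) simp
    ultimately show ?thesis by (intro divide_right_mono mult_left_mono) auto
  qed
  also have "\<dots> \<le> 3 * (1 + 2 * h) / h\<^sup>2"
  proof -
    have "c\<^sup>2 * ma = a * (a / ma)" unfolding c_def using mapos by (simp add: power2_eq_square)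
    also have "\<dots> \<le> a * 1" using ma a1 mapos by (intro mult_left_mono) auto
    finally have "c\<^sup>2 * ma \<le> a" by simp
    hence "1 + mb + c\<^sup>2 * ma \<le> 1 + 2 * h" using mb a_def b_def by simp
    thus ?thesis by (intro divide_right_mono mult_left_mono) auto
  qed
  finally show ?thesis unfolding h_def .
qed

lemma h_inf:
  assumes surv: "\<And>x. x \<ge> 0 \<Longrightarrow> measure M {\<omega> \<in> space M. X 0 \<omega> > x} > 0"
  shows "filterlim (\<lambda>n. theo_h M (X 0) n) at_top sequentially"
  unfolding filterlim_at_top
proof (intro allI)
  fix Z :: real
  define x where "x = max Z 0"
  have "measure M {\<omega> \<in> space M. X 0 \<omega> > x} \<le> P x"
    unfolding P_def by (rule finite_measure_mono) auto
  with surv[of x] have p: "0 < P x" unfolding x_def by simp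
  obtain N :: nat where N: "x / P x \<le> real N" using real_arch_simple by blast
  show "eventually (\<lambda>n. Z \<le> theo_h M (X 0) n) sequentially"
  proof (rule eventually_sequentiallyI[of N])
    fix n assume n: "N \<le> n"
    interpret T: hidx_loc "\<lambda>y. real n * P y" "real n" by (rule theo_loc)
    have "x \<le> real N * P x" using N p by (simp add: field_simps)
    also have "\<dots> \<le> real n * P x" using n p by (intro mult_right_mono) auto
    finally have "x \<le> hidx (\<lambda>y. real n * P y)" by (intro T.hidx_ge) (auto simp: x_def)
    thus "Z \<le> theo_h M (X 0) n" unfolding theo_eq x_def by simp
  qed
qed

lemma final:
  assumes surv: "\<And>x. x \<ge> 0 \<Longrightarrow> measure M {\<omega> \<in> space M. X 0 \<omega> > x} > 0"
  shows "((\<lambda>n. expectation (\<lambda>\<omega>. (emp_h X n \<omega> / theo_h M (X 0) n - 1)\<^sup>2)) \<longlonglongrightarrow> 0) \<and>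
         ((\<lambda>n. expectation (emp_h X n) / theo_h M (X 0) n) \<longlonglongrightarrow> 1)"
proof -
  define h where "h = (\<lambda>n. theo_h M (X 0) n)"
  define Q where "Q = (\<lambda>n. expectation (\<lambda>\<omega>. (emp_h X n \<omega> / h n - 1)\<^sup>2))"
  have hinf: "filterlim h at_top sequentially" unfolding h_def by (rule h_inf[OF surv])
  have ev: "eventually (\<lambda>n. 2 \<le> h n) sequentially" using hinf by (simp add: filterlim_at_top)
  have f0: "((\<lambda>y::real. 3 * (1 + 2 * y) / y\<^sup>2) \<longlongrightarrow> 0) at_top" by real_asymp
  have fh: "(\<lambda>n. 3 * (1 + 2 * h n) / (h n)\<^sup>2) \<longlonglongrightarrow> 0"
    using filterlim_compose[OF f0 hinf] by (simp add: o_def)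
  have Q0: "Q \<longlonglongrightarrow> 0"
  proof (rule tendsto_sandwich[OF _ _ tendsto_const fh])
    show "eventually (\<lambda>n. 0 \<le> Q n) sequentially" unfolding Q_def by (intro always_eventually allI integral_nonneg) simp
    show "eventually (\<lambda>n. Q n \<le> 3 * (1 + 2 * h n) / (h n)\<^sup>2) sequentially"
      using ev unfolding Q_def h_def by eventually_elim (rule bound)
  qed
  define EZ where "EZ = (\<lambda>n. expectation (\<lambda>\<omega>. emp_h X n \<omega> / h n - 1))"
  have EZeq: "expectation (emp_h X n) / h n = EZ n + 1" for n
  proof -
    have "EZ n = expectation (\<lambda>\<omega>. emp_h X n \<omega> / h n) - 1" unfolding EZ_def
      using emp_int[of n] by (subst Bochner_Integration.integral_diff) (auto simp: prob_space)
    thus ?thesis by simp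
  qed
  have sq: "(EZ n)\<^sup>2 \<le> Q n" for n
  proof -
    have "0 \<le> variance (\<lambda>\<omega>. emp_h X n \<omega> / h n - 1)" by (rule variance_positive)
    also have "\<dots> = Q n - (EZ n)\<^sup>2" unfolding Q_def EZ_def
      by (rule variance_eq[OF Z1_int Z_int])
    finally show ?thesis by simp
  qed
  have EZ0: "EZ \<longlonglongrightarrow> 0"
  proof (rule Lim_null_comparison)
    show "eventually (\<lambda>n. norm (EZ n) \<le> sqrt (Q n)) sequentially"
      by (intro always_eventually allI) (metis real_norm_def real_sqrt_abs real_sqrt_le_mono sq)
    show "(\<lambda>n. sqrt (Q n)) \<longlonglongrightarrow> 0" using tendsto_real_sqrt[OF Q0] by simp
  qed
  have "(\<lambda>n. EZ n + 1) \<longlonglongrightarrow> 0 + 1" by (intro tendsto_add EZ0 tendsto_const)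
  hence "(\<lambda>n. expectation (emp_h X n) / h n) \<longlonglongrightarrow> 1" unfolding EZeq by simp
  with Q0 show ?thesis unfolding Q_def h_def by simp
qed

end
theorem corollary3p2:
  fixes M :: "'a measure" and X :: "nat \<Rightarrow> 'a \<Rightarrow> real"
  assumes "prob_space M"
    and rv: "\<And>i. X i \<in> borel_measurable M"
    and indep: "prob_space.indep_vars M (\<lambda>_. borel) X UNIV"
    and ident: "\<And>i. distr M borel (X i) = distr M borel (X 0)"
    and pos: "AE \<omega> in M. X 0 \<omega> > 0"
    and surv_pos: "\<And>x. x \<ge> 0 \<Longrightarrow> measure M {\<omega> \<in> space M. X 0 \<omega> > x} > 0"
  shows "((\<lambda>n. prob_space.expectation M (\<lambda>\<omega>. (emp_h X n \<omega> / theo_h M (X 0) n - 1)\<^sup>2))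
           \<longlonglongrightarrow> 0) \<and>
         ((\<lambda>n. prob_space.expectation M (emp_h X n) / theo_h M (X 0) n) \<longlonglongrightarrow> 1)"
proof -
  interpret hsetup M X
    by (rule hsetup.intro[OF assms(1)], rule hsetup_axioms.intro) (use rv indep ident in auto)
  show ?thesis using final[OF surv_pos] by simp
qed

end
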